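(* The Hopf algebra $(dWHA,m,\mu)$ is selfdual with respect to the bilinear form $\langle\cdot,\cdot\rangle$ defined on substitutions by $\left\langle \binom{\rho}{\sigma},\binom{\rho'}{\sigma'}\right\rangle=1$ if after a renaming of letters one has $\rho=\sigma'$ and $\rho'=\sigma$, and $=0$ otherwise. That is, for all substitutions $p,p',p''$: $\langle m(p\otimes p'),p''\rangle=\langle p\otimes p',\mu(p'')\rangle$, where $\langle a\otimes b,c\otimes d\rangle=\langle a,c\rangle\langle b,d\rangle$.
   Context: Words are finite sequences of letters; $*$ denotes concatenation; the support $\mathrm{supp}(\alpha)$ of a word is the set of letters occurring in it. The shuffle product $\alpha\times_{sh}\beta$ of words $\alpha=[c_1,\dots,c_p]$, $\beta=[d_1,\dots,d_q]$ is the sum, with multiplicities, over all ways of choosing $p$ of the $p+q$ positions, of the word obtained by placing the $c$'s in their original order in the chosen positions and the $d$'s in their original order in the remaining ones. A subword of $[a_1,\dots,a_m]$ is a word $[a_{i_1},\dots,a_{i_r}]$ with $i_1<\dots<i_r$. Definition of $dWHA$: Let $\mathcal X$ be a countably infinite alphabet. A substitution is a pair $p=\binom{\rho}{\sigma}$ of words over $\mathcal X$ with $\mathrm{supp}(\rho)=\mathrm{supp}(\sigma)$, considered up to simultaneously renaming the letters of both words by a bijection of $\mathcal X$. $dWHA$ is the free abelian group with basis all substitutions (including the empty substitution $\binom{[\,]}{[\,]}$), graded by $\deg(p)=\#\mathrm{supp}(\rho)$. Multiplication: for substitutions $p=\binom{\rho}{\sigma}$, $p'=\binom{\rho'}{\sigma'}$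 written with $\mathrm{supp}(\rho)\cap\mathrm{supp}(\rho')=\emptyset$, $m(p\otimes p')=\binom{\rho*\rho'}{\sigma\times_{sh}\sigma'}$, meaning the sum of $\binom{\rho*\rho'}{\gamma}$ over the terms $\gamma$ (with multiplicity) of $\sigma\times_{sh}\sigma'$. The unit is the empty substitution. A good cut of a word $\sigma$ is a factorization $\sigma=\sigma_1*\sigma_2$ with $\mathrm{supp}(\sigma_1)\cap\mathrm{supp}(\sigma_2)=\emptyset$ (the two trivial cuts included). Comultiplication: $\mu(p)=\sum \binom{p^{-1}(\sigma_1)}{\sigma_1}\otimes\binom{p^{-1}(\sigma_2)}{\sigma_2}$, summed over all good cuts $\sigma=\sigma_1*\sigma_2$, where $p^{-1}(\sigma_i)$ is the subword of $\rho$ consisting of all occurrences in $\rho$ of letters of $\mathrm{supp}(\sigma_i)$. Counit: $\varepsilon$ is $1$ on the empty substitution and $0$ on all other substitutions. This is a Hopf algebra. *)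

theory Defs
  imports Main
begin

text \<open>A substitution is represented by a pair (rho, sigma) of words with equal support;
  substitutions are considered up to simultaneous renaming by a bijection of the alphabet.
  All notions below are invariant under such renamings.\<close>

type_synonym word = "nat list"
type_synonym subst = "word \<times> word"

definition is_subst :: "subst \<Rightarrow> bool" where
  "is_subst p \<longleftrightarrow> set (fst p) = set (snd p)"

text \<open>Shuffle product with multiplicities: the list of all words obtained by choosing
  positions (one entry per choice of positions).\<close>
fun shuffle :: "'a list \<Rightarrow> 'a list \<Rightarrow> 'a list list" where
  "shuffle [] ys = [ys]"
| "shuffle xs [] = [xs]"
| "shuffle (x # xs) (y # ys) =
     map ((#) x) (shuffle xs (y # ys)) @ map ((#) y) (shuffle (x # xs) ys)"

text \<open>Product m(p \<otimes> p'): representatives are first renamed to have disjoint supports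
  (even letters for p, odd letters for p'); the result is a formal sum of substitutions,
  given as a list of basis terms (with multiplicity).\<close>
definition mult_terms :: "subst \<Rightarrow> subst \<Rightarrow> subst list" where
  "mult_terms p p' =
     (let r = map (\<lambda>x. 2 * x) (fst p); s = map (\<lambda>x. 2 * x) (snd p);
          r' = map (\<lambda>x. 2 * x + 1) (fst p'); s' = map (\<lambda>x. 2 * x + 1) (snd p')
      in map (\<lambda>g. (r @ r', g)) (shuffle s s'))"

definition good_cuts :: "word \<Rightarrow> nat list" where
  "good_cuts s = filter (\<lambda>i. set (take i s) \<inter> set (drop i s) = {}) [0..<Suc (length s)]"

definition preimage_word :: "word \<Rightarrow> word \<Rightarrow> word" where
  "preimage_word r s1 = filter (\<lambda>x. x \<in> set s1) r"

definition coprod_terms :: "subst \<Rightarrow> (subst \<times> subst) list" where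
  "coprod_terms p =
     map (\<lambda>i. let s1 = take i (snd p); s2 = drop i (snd p) in
               ((preimage_word (fst p) s1, s1), (preimage_word (fst p) s2, s2)))
       (good_cuts (snd p))"

definition pairing :: "subst \<Rightarrow> subst \<Rightarrow> int" where
  "pairing p p' =
     (if \<exists>f::nat \<Rightarrow> nat. bij f \<and> map f (fst p) = snd p' \<and> map f (snd p) = fst p' then 1 else 0)"

definition pairing_left_sum :: "subst list \<Rightarrow> subst \<Rightarrow> int" where
  "pairing_left_sum xs q = sum_list (map (\<lambda>t. pairing t q) xs)"

definition pairing_tensor_sum :: "subst \<Rightarrow> subst \<Rightarrow> (subst \<times> subst) list \<Rightarrow> int" where
  "pairing_tensor_sum p p' ts = sum_list (map (\<lambda>(a, b). pairing p a * pairing p' b) ts)"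

end

theory Submission imports Defs begin

lemma shuffle_Nil2[simp]: "shuffle xs [] = [xs]"
  by (cases xs) auto

lemma shuffle_map: "shuffle (map f xs) (map f ys) = map (map f) (shuffle xs ys)"
  by (induction xs ys rule: shuffle.induct) auto

lemma shuffle_set: "zs \<in> set (shuffle xs ys) \<Longrightarrow> set zs = set xs \<union> set ys"
  by (induction xs ys arbitrary: zs rule: shuffle.induct) auto

lemma shuffle_distinct: "set xs \<inter> set ys = {} \<Longrightarrow> distinct (shuffle xs ys)"
  by (induction xs ys rule: shuffle.induct) (auto simp: distinct_map)

lemma shuffle_cons1: "zs \<in> set (shuffle xs ys) \<Longrightarrow> a # zs \<in> set (shuffle (a # xs) ys)"
  by (cases ys) auto

lemma shuffle_cons2: "zs \<in> set (shuffle xs ys) \<Longrightarrow> a # zs \<in> set (shuffle xs (a # ys))"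
  by (cases xs) auto

lemma shuffle_filter: "zs \<in> set (shuffle xs ys) \<Longrightarrow> filter P zs \<in> set (shuffle (filter P xs) (filter P ys))"
proof (induction xs ys arbitrary: zs rule: shuffle.induct)
  case (3 x xs y ys)
  from "3.prems" consider z where "z \<in> set (shuffle xs (y # ys))" "zs = x # z"
    | z where "z \<in> set (shuffle (x # xs) ys)" "zs = y # z" by auto
  then show ?case
  proof cases
    case 1
    then have "filter P z \<in> set (shuffle (filter P xs) (filter P (y # ys)))" using "3.IH"(1) by blast
    then show ?thesis using 1 by (cases "P x") (simp_all add: shuffle_cons1)
  next
    case 2
    then have "filter P z \<in> set (shuffle (filter P (x # xs)) (filter P ys))" using "3.IH"(2) by blast
    then show ?thesis using 2 by (cases "P y") (simp_all add: shuffle_cons2)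
  qed
qed auto

lemma shuffle_split:
  assumes "\<forall>x\<in>set zs. (P x \<or> Q x) \<and> \<not> (P x \<and> Q x)"
  shows "zs \<in> set (shuffle (filter P zs) (filter Q zs))"
  using assms by (induction zs) (auto intro: shuffle_cons1 shuffle_cons2)

lemma sum01:
  assumes "distinct xs" "\<forall>x\<in>set xs. h x = 0 \<or> h x = (1::int)"
    "\<forall>x\<in>set xs. \<forall>y\<in>set xs. h x = 1 \<longrightarrow> h y = 1 \<longrightarrow> x = y"
  shows "sum_list (map h xs) = (if \<exists>x\<in>set xs. h x = 1 then 1 else 0)"
  using assms by (induction xs) auto

lemma sum_single:
  assumes "distinct xs" "\<forall>x\<in>set xs. x \<noteq> k \<longrightarrow> h x = (0::int)"
  shows "sum_list (map h xs) = (if k \<in> set xs then h k else 0)"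
  using assms
proof (induction xs)
  case (Cons a xs)
  then show ?case by (cases "a = k") auto
qed auto

lemma inj_extend_bij:
  fixes h :: "'a \<Rightarrow> 'a"
  assumes "finite A" "inj_on h A"
  shows "\<exists>F. bij F \<and> (\<forall>x\<in>A. F x = h x)"
proof -
  define B where "B = h ` A"
  have fB: "finite B" using assms B_def by auto
  have cAB: "card B = card A" unfolding B_def by (rule card_image[OF assms(2)])
  have "card (B - A) = card B - card (B \<inter> A)" by (rule card_Diff_subset_Int) (simp add: fB)
  also have "\<dots> = card A - card (A \<inter> B)" using cAB by (simp add: Int_commute)
  also have "\<dots> = card (A - B)" by (rule card_Diff_subset_Int[symmetric]) (simp add: assms(1))
  finally have "card (B - A) = card (A - B)" .
  then obtain k where k: "bij_betw k (B - A) (A - B)"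
    using finite_same_card_bij[of "B - A" "A - B"] fB assms(1) by auto
  define F where "F x = (if x \<in> A then h x else if x \<in> B then k x else x)" for x
  have hb: "bij_betw h A B" unfolding B_def by (rule inj_on_imp_bij_betw[OF assms(2)])
  have "bij_betw F A B = bij_betw h A B" by (rule bij_betw_cong) (simp add: F_def)
  with hb have b1: "bij_betw F A B" by simp
  have "bij_betw F (B - A) (A - B) = bij_betw k (B - A) (A - B)" by (rule bij_betw_cong) (simp add: F_def)
  with k have b2: "bij_betw F (B - A) (A - B)" by simp
  have b3: "bij_betw F (A \<union> (B - A)) (B \<union> (A - B))"
    by (rule bij_betw_combine[OF b1 b2]) auto
  have e1: "A \<union> (B - A) = A \<union> B" "B \<union> (A - B) = A \<union> B" by auto
  have b4: "bij_betw F (A \<union> B) (A \<union> B)" using b3 unfolding e1 .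
  have "bij_betw F (- (A \<union> B)) (- (A \<union> B)) = bij_betw id (- (A \<union> B)) (- (A \<union> B))"
    by (rule bij_betw_cong) (simp add: F_def)
  then have b5: "bij_betw F (- (A \<union> B)) (- (A \<union> B))" by simp
  have "bij_betw F ((A \<union> B) \<union> - (A \<union> B)) ((A \<union> B) \<union> - (A \<union> B))"
    by (rule bij_betw_combine[OF b4 b5]) auto
  moreover have "(A \<union> B) \<union> - (A \<union> B) = UNIV" by blast
  ultimately have "bij F" unfolding bij_def bij_betw_def by simp
  moreover have "\<forall>x\<in>A. F x = h x" unfolding F_def by auto
  ultimately show ?thesis by blast
qed

lemma pairing_iff:
  "pairing p q = (if \<exists>f. inj_on f (set (fst p) \<union> set (snd p)) \<and> map f (fst p) = snd q \<and> map f (snd p) = fst q then 1 else 0)"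
proof -
  have "(\<exists>f::nat\<Rightarrow>nat. bij f \<and> map f (fst p) = snd q \<and> map f (snd p) = fst q) \<longleftrightarrow>
        (\<exists>f. inj_on f (set (fst p) \<union> set (snd p)) \<and> map f (fst p) = snd q \<and> map f (snd p) = fst q)"
  proof
    assume "\<exists>f::nat\<Rightarrow>nat. bij f \<and> map f (fst p) = snd q \<and> map f (snd p) = fst q"
    then show "\<exists>f. inj_on f (set (fst p) \<union> set (snd p)) \<and> map f (fst p) = snd q \<and> map f (snd p) = fst q"
      by (meson bij_is_inj inj_on_subset subset_UNIV)
  next
    assume "\<exists>f. inj_on f (set (fst p) \<union> set (snd p)) \<and> map f (fst p) = snd q \<and> map f (snd p) = fst q"
    then obtain f where f: "inj_on f (set (fst p) \<union> set (snd p))" "map f (fst p) = snd q" "map f (snd p) = fst q"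
      by blast
    obtain F where F: "bij F" "\<forall>x\<in>set (fst p) \<union> set (snd p). F x = f x"
      using inj_extend_bij[OF _ f(1)] by blast
    have "map F (fst p) = map f (fst p)" "map F (snd p) = map f (snd p)" using F(2) by auto
    then show "\<exists>f::nat\<Rightarrow>nat. bij f \<and> map f (fst p) = snd q \<and> map f (snd p) = fst q"
      using F(1) f by metis
  qed
  then show ?thesis unfolding pairing_def by simp
qed

lemma good_cuts_mem: "i \<in> set (good_cuts S) \<longleftrightarrow> i \<le> length S \<and> set (take i S) \<inter> set (drop i S) = {}"
  unfolding good_cuts_def by auto

lemma pairing01: "pairing p q = 0 \<or> pairing p q = 1"
  unfolding pairing_def by auto

theorem theorem7p11:
  fixes p p' p'' :: subst
  assumes "is_subst p" and "is_subst p'" and "is_subst p''"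
  shows "pairing_left_sum (mult_terms p p') p'' = pairing_tensor_sum p p' (coprod_terms p'')"
proof -
  obtain \<rho> \<sigma> where pp: "p = (\<rho>, \<sigma>)" by (cases p)
  obtain \<rho>' \<sigma>' where pp': "p' = (\<rho>', \<sigma>')" by (cases p')
  obtain R S where pp'': "p'' = (R, S)" by (cases p'')
  have sp: "set \<sigma> = set \<rho>" using assms(1) pp unfolding is_subst_def by simp
  have sp': "set \<sigma>' = set \<rho>'" using assms(2) pp' unfolding is_subst_def by simp
  have sp'': "set R = set S" using assms(3) pp'' unfolding is_subst_def by simp
  define r where "r = map (\<lambda>x. 2 * x) \<rho>"
  define s where "s = map (\<lambda>x. 2 * x) \<sigma>"
  define r' where "r' = map (\<lambda>x. 2 * x + 1) \<rho>'"
  define s' where "s' = map (\<lambda>x. 2 * x + 1) \<sigma>'"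
  define n where "n = length \<rho>"
  have ss: "set s = set r" "set s' = set r'" unfolding s_def r_def s'_def r'_def using sp sp' by auto
  have disj: "set r \<inter> set r' = {}" unfolding r_def r'_def by auto presburger
  have lenr: "length r = n" unfolding r_def n_def by simp
  define h where "h g = pairing (r @ r', g) (R, S)" for g
  define T1 where "T1 = pairing p (preimage_word R (take n S), take n S)"
  define T2 where "T2 = pairing p' (preimage_word R (drop n S), drop n S)"
  have L: "pairing_left_sum (mult_terms p p') p'' = sum_list (map h (shuffle s s'))"
    unfolding pairing_left_sum_def mult_terms_def h_def pp pp' pp'' r_def s_def r'_def s'_def
    by (simp add: comp_def)
  define T where "T i = pairing p (preimage_word R (take i S), take i S) *
                        pairing p' (preimage_word R (drop i S), drop i S)" for i
  have R0: "pairing_tensor_sum p p' (coprod_terms p'') = sum_list (map T (good_cuts S))"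
    unfolding pairing_tensor_sum_def coprod_terms_def T_def pp''
    by (simp add: comp_def Let_def)
  have Tz: "\<forall>i\<in>set (good_cuts S). i \<noteq> n \<longrightarrow> T i = 0"
  proof (intro ballI impI)
    fix i assume i: "i \<in> set (good_cuts S)" "i \<noteq> n"
    have "length (take i S) \<noteq> length \<rho>" using i good_cuts_mem[of i S] n_def by auto
    then have "pairing p (preimage_word R (take i S), take i S) = 0"
    proof -
      have "\<not> (\<exists>f. map f \<rho> = take i S)" using \<open>length (take i S) \<noteq> length \<rho>\<close> by (metis length_map)
      then show ?thesis unfolding pairing_iff pp fst_conv snd_conv by auto
    qed
    then show "T i = 0" unfolding T_def by simp
  qed
  have R1: "pairing_tensor_sum p p' (coprod_terms p'') = (if n \<in> set (good_cuts S) then T1 * T2 else 0)"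
  proof -
    have "sum_list (map T (good_cuts S)) = (if n \<in> set (good_cuts S) then T n else 0)"
      by (rule sum_single[OF _ Tz]) (simp add: good_cuts_def)
    then show ?thesis unfolding R0 T_def T1_def T2_def by simp
  qed
  have hg01: "\<forall>g\<in>set (shuffle s s'). h g = 0 \<or> h g = 1" unfolding h_def using pairing01 by blast
  have huniq: "\<forall>g1\<in>set (shuffle s s'). \<forall>g2\<in>set (shuffle s s'). h g1 = 1 \<longrightarrow> h g2 = 1 \<longrightarrow> g1 = g2"
  proof (intro ballI impI)
    fix g1 g2 assume g: "g1 \<in> set (shuffle s s')" "g2 \<in> set (shuffle s s')" "h g1 = 1" "h g2 = 1"
    obtain f1 where f1: "inj_on f1 (set (r @ r') \<union> set g1)" "map f1 (r @ r') = S" "map f1 g1 = R"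
      using g(3) unfolding h_def pairing_iff by (auto split: if_splits)
    obtain f2 where f2: "inj_on f2 (set (r @ r') \<union> set g2)" "map f2 (r @ r') = S" "map f2 g2 = R"
      using g(4) unfolding h_def pairing_iff by (auto split: if_splits)
    have sg: "set g1 = set r \<union> set r'" "set g2 = set r \<union> set r'"
      using shuffle_set[OF g(1)] shuffle_set[OF g(2)] ss by auto
    have agree: "\<forall>x\<in>set r \<union> set r'. f1 x = f2 x"
    proof -
      have "map f1 (r @ r') = map f2 (r @ r')" using f1(2) f2(2) by simp
      then show ?thesis by (simp only: map_eq_conv set_append)
    qed
    have "map f1 g2 = map f2 g2" using agree sg by auto
    then have "map f1 g1 = map f1 g2" using f1(3) f2(3) by simp
    moreover have "inj_on f1 (set g1 \<union> set g2)" using f1(1) sg by simp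
    ultimately show "g1 = g2" using inj_on_map_eq_map[of f1 g1 g2] by simp
  qed
  have L1: "pairing_left_sum (mult_terms p p') p'' = (if \<exists>g\<in>set (shuffle s s'). h g = 1 then 1 else 0)"
    unfolding L by (rule sum01[OF shuffle_distinct hg01 huniq]) (use disj ss in auto)
  have key: "(\<exists>g\<in>set (shuffle s s'). h g = 1) \<longleftrightarrow> n \<in> set (good_cuts S) \<and> T1 = 1 \<and> T2 = 1"
  proof
    assume "\<exists>g\<in>set (shuffle s s'). h g = 1"
    then obtain g where g: "g \<in> set (shuffle s s')" "h g = 1" by blast
    obtain f where f: "inj_on f (set (r @ r') \<union> set g)" "map f (r @ r') = S" "map f g = R"
      using g(2) unfolding h_def pairing_iff by (auto split: if_splits)
    have sg: "set g = set r \<union> set r'" using shuffle_set[OF g(1)] ss by auto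
    have inj: "inj_on f (set r \<union> set r')" using f(1) by (rule inj_on_subset) auto
    have tk: "take n S = map f r" and dr: "drop n S = map f r'" using f(2) lenr by auto
    have "f ` set r \<inter> f ` set r' = {}"
      using inj_on_image_Int[OF inj, of "set r" "set r'"] disj by simp
    then have good: "n \<in> set (good_cuts S)" unfolding good_cuts_mem tk dr
      using f(2) lenr by auto
    have fl: "filter P g = filter P s" if "\<forall>x\<in>set s. P x" "\<forall>x\<in>set s'. \<not> P x" for P
    proof -
      have "filter P g \<in> set (shuffle (filter P s) (filter P s'))" by (rule shuffle_filter[OF g(1)])
      moreover have "filter P s' = []" using that(2) by (simp add: filter_empty_conv)
      ultimately show ?thesis using that(1) by simp
    qed
    have fl': "filter P g = filter P s'" if "\<forall>x\<in>set s'. P x" "\<forall>x\<in>set s. \<not> P x" for P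
    proof -
      have "filter P g \<in> set (shuffle (filter P s) (filter P s'))" by (rule shuffle_filter[OF g(1)])
      moreover have "filter P s = []" using that(2) by (simp add: filter_empty_conv)
      ultimately show ?thesis using that(1) by simp
    qed
    have pw1: "preimage_word R (take n S) = map f s"
    proof -
      have "preimage_word R (take n S) = filter (\<lambda>x. x \<in> f ` set r) (map f g)"
        unfolding preimage_word_def tk f(3)[symmetric] by simp
      also have "\<dots> = map f (filter (\<lambda>x. f x \<in> f ` set r) g)" by (simp add: filter_map comp_def)
      also have "filter (\<lambda>x. f x \<in> f ` set r) g = filter (\<lambda>x. x \<in> set r) g"
        by (rule filter_cong) (use inj sg in \<open>auto simp: inj_on_image_mem_iff\<close>)
      also have "\<dots> = filter (\<lambda>x. x \<in> set r) s" by (rule fl) (use ss disj in auto)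
      also have "\<dots> = s" using ss by simp
      finally show ?thesis .
    qed
    have pw2: "preimage_word R (drop n S) = map f s'"
    proof -
      have "preimage_word R (drop n S) = filter (\<lambda>x. x \<in> f ` set r') (map f g)"
        unfolding preimage_word_def dr f(3)[symmetric] by simp
      also have "\<dots> = map f (filter (\<lambda>x. f x \<in> f ` set r') g)" by (simp add: filter_map comp_def)
      also have "filter (\<lambda>x. f x \<in> f ` set r') g = filter (\<lambda>x. x \<in> set r') g"
        by (rule filter_cong) (use inj sg in \<open>auto simp: inj_on_image_mem_iff\<close>)
      also have "\<dots> = filter (\<lambda>x. x \<in> set r') s'" by (rule fl') (use ss disj in auto)
      also have "\<dots> = s'" using ss by simp
      finally show ?thesis .
    qed
    have i1: "inj_on (f \<circ> (\<lambda>x. 2 * x)) (set \<rho> \<union> set \<sigma>)"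
    proof (rule comp_inj_on)
      show "inj_on (\<lambda>x::nat. 2 * x) (set \<rho> \<union> set \<sigma>)" by (auto simp: inj_on_def)
      have "(\<lambda>x::nat. 2 * x) ` (set \<rho> \<union> set \<sigma>) \<subseteq> set r \<union> set r'" using sp by (auto simp: r_def)
      then show "inj_on f ((\<lambda>x::nat. 2 * x) ` (set \<rho> \<union> set \<sigma>))" by (rule inj_on_subset[OF inj])
    qed
    have i2: "inj_on (f \<circ> (\<lambda>x. 2 * x + 1)) (set \<rho>' \<union> set \<sigma>')"
    proof (rule comp_inj_on)
      show "inj_on (\<lambda>x::nat. 2 * x + 1) (set \<rho>' \<union> set \<sigma>')" by (auto simp: inj_on_def)
      have "(\<lambda>x::nat. 2 * x + 1) ` (set \<rho>' \<union> set \<sigma>') \<subseteq> set r \<union> set r'" using sp' by (auto simp: r'_def)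
      then show "inj_on f ((\<lambda>x::nat. 2 * x + 1) ` (set \<rho>' \<union> set \<sigma>'))" by (rule inj_on_subset[OF inj])
    qed
    have "T1 = 1" unfolding T1_def pairing_iff pp fst_conv snd_conv
      using i1 tk pw1 unfolding r_def s_def by auto
    moreover have "T2 = 1" unfolding T2_def pairing_iff pp' fst_conv snd_conv
      using i2 dr pw2 unfolding r'_def s'_def by auto
    ultimately show "n \<in> set (good_cuts S) \<and> T1 = 1 \<and> T2 = 1" using good by simp
  next
    assume a: "n \<in> set (good_cuts S) \<and> T1 = 1 \<and> T2 = 1"
    obtain h1 where h1: "inj_on h1 (set \<rho> \<union> set \<sigma>)" "map h1 \<rho> = take n S"
      "map h1 \<sigma> = preimage_word R (take n S)"
      using a unfolding T1_def pairing_iff pp by (auto split: if_splits)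
    obtain h2 where h2: "inj_on h2 (set \<rho>' \<union> set \<sigma>')" "map h2 \<rho>' = drop n S"
      "map h2 \<sigma>' = preimage_word R (drop n S)"
      using a unfolding T2_def pairing_iff pp' by (auto split: if_splits)
    have gc: "set (take n S) \<inter> set (drop n S) = {}" using a good_cuts_mem by blast
    define f where "f x = (if even x then h1 (x div 2) else h2 (x div 2))" for x
    have mr: "map f r = take n S" unfolding r_def f_def using h1(2) by (simp add: comp_def)
    have mr': "map f r' = drop n S" unfolding r'_def f_def using h2(2) by (simp add: comp_def)
    have ms: "map f s = preimage_word R (take n S)" unfolding s_def f_def using h1(3) by (simp add: comp_def)
    have ms': "map f s' = preimage_word R (drop n S)" unfolding s'_def f_def using h2(3) by (simp add: comp_def)
    have inj: "inj_on f (set r \<union> set r')"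
    proof (rule inj_onI)
      fix x y assume xy: "x \<in> set r \<union> set r'" "y \<in> set r \<union> set r'" "f x = f y"
      have A: "h1 a \<noteq> h2 b" if "a \<in> set \<rho>" "b \<in> set \<rho>'" for a b
      proof -
        have "h1 a \<in> set (take n S)" using h1(2) that(1) by (metis image_eqI set_map)
        moreover have "h2 b \<in> set (drop n S)" using h2(2) that(2) by (metis image_eqI set_map)
        ultimately show ?thesis using gc by auto
      qed
      from xy(1) obtain a where a: "(x = 2*a \<and> a \<in> set \<rho>) \<or> (x = 2*a+1 \<and> a \<in> set \<rho>')"
        unfolding r_def r'_def by auto
      from xy(2) obtain b where b: "(y = 2*b \<and> b \<in> set \<rho>) \<or> (y = 2*b+1 \<and> b \<in> set \<rho>')"
        unfolding r_def r'_def by auto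
      have e: "f (2*c) = h1 c" "f (2*c+1) = h2 c" for c unfolding f_def by simp_all
      show "x = y"
      proof (cases "x = 2*a \<and> a \<in> set \<rho>")
        case True
        show ?thesis
        proof (cases "y = 2*b \<and> b \<in> set \<rho>")
          case True2: True
          then have "h1 a = h1 b" using True xy(3) e by simp
          then have "a = b" using inj_onD[OF h1(1)] True True2 by blast
          then show ?thesis using True True2 by simp
        next
          case False
          then have "y = 2*b+1" "b \<in> set \<rho>'" using b by auto
          then have "h1 a = h2 b" using True xy(3) e by simp
          then show ?thesis using A True \<open>b \<in> set \<rho>'\<close> by blast
        qed
      next
        case False
        then have x1: "x = 2*a+1" "a \<in> set \<rho>'" using a by auto
        show ?thesis
        proof (cases "y = 2*b \<and> b \<in> set \<rho>")
          case True
          then have "h2 a = h1 b" using x1 xy(3) e by simp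
          then show ?thesis using A True x1 by metis
        next
          case False
          then have y1: "y = 2*b+1" "b \<in> set \<rho>'" using b by auto
          then have "h2 a = h2 b" using x1 xy(3) e by simp
          then have "a = b" using inj_onD[OF h2(1)] x1 y1 by blast
          then show ?thesis using x1 y1 by simp
        qed
      qed
    qed
    have RS: "R \<in> set (shuffle (filter (\<lambda>x. x \<in> set (take n S)) R) (filter (\<lambda>x. x \<in> set (drop n S)) R))"
    proof (rule shuffle_split)
      show "\<forall>x\<in>set R. (x \<in> set (take n S) \<or> x \<in> set (drop n S)) \<and> \<not> (x \<in> set (take n S) \<and> x \<in> set (drop n S))"
      proof
        fix x assume "x \<in> set R"
        then have "x \<in> set (take n S) \<union> set (drop n S)" using sp'' by (metis append_take_drop_id set_append)
        then show "(x \<in> set (take n S) \<or> x \<in> set (drop n S)) \<and> \<not> (x \<in> set (take n S) \<and> x \<in> set (drop n S))"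
          using gc by auto
      qed
    qed
    then have "R \<in> set (shuffle (map f s) (map f s'))" using ms ms' unfolding preimage_word_def by simp
    then obtain g where g: "g \<in> set (shuffle s s')" "map f g = R" unfolding shuffle_map by auto
    have sg: "set g = set r \<union> set r'" using shuffle_set[OF g(1)] ss by auto
    have "inj_on f (set (r @ r') \<union> set g)" using inj sg by simp
    moreover have "map f (r @ r') = S" using mr mr' by simp
    ultimately have "\<exists>f'. inj_on f' (set (r @ r') \<union> set g) \<and> map f' (r @ r') = S \<and> map f' g = R"
      using g(2) by blast
    then have "h g = 1" unfolding h_def pairing_iff fst_conv snd_conv by simp
    then show "\<exists>g\<in>set (shuffle s s'). h g = 1" using g(1) by blast
  qed
  have t1: "T1 = 0 \<or> T1 = 1" and t2: "T2 = 0 \<or> T2 = 1" unfolding T1_def T2_def by (rule pairing01)+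
  show ?thesis unfolding L1 R1 using key t1 t2 by (cases "n \<in> set (good_cuts S)") auto
qed

end
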